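(* Let $b>2$ and $d\in\{1,\dots,b-1\}$. Then $H^{(0)}>b\log b-b\log\!\left(1+\frac1d\right)$. Consequently $H^{(0)}>b\log(b/2)$.
   Context: For an integer $n\ge0$, $k(n)$ denotes the number of occurrences of the digit $d$ in the base-$b$ representation of $n$ without leading zeros. $H^{(0)}=\sum_{n\ge1,\ k(n)=0}1/n$ is the sum of reciprocals of positive integers whose base-$b$ representation does not contain the digit $d$. *)

theory Defs
  imports "HOL-Analysis.Analysis"
begin

text \<open>Base-b digits of n, least significant first, without leading zeros
  (n = 0 has the empty digit list).\<close>
fun digits_base :: "nat \<Rightarrow> nat \<Rightarrow> nat list" where
  "digits_base b n = (if b < 2 \<or> n = 0 then [] else (n mod b) # digits_base b (n div b))"

definition digit_count :: "nat \<Rightarrow> nat \<Rightarrow> nat \<Rightarrow> nat" where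
  "digit_count b d n = count_list (digits_base b n) d"

definition H0 :: "nat \<Rightarrow> nat \<Rightarrow> real" where
  "H0 b d = infsum (\<lambda>n. 1 / real n) {n. n \<ge> 1 \<and> digit_count b d n = 0}"

end

theory Submission
  imports Defs
begin


declare digits_base.simps[simp del]

lemma dc0[simp]: "digit_count b d 0 = 0"
  unfolding digit_count_def by (subst digits_base.simps) simp

lemma dc_step: "b \<ge> 2 \<Longrightarrow> m > 0 \<Longrightarrow>
  digit_count b d m = (if m mod b = d then 1 else 0) + digit_count b d (m div b)"
  unfolding digit_count_def by (subst digits_base.simps) simp

definition AA :: "nat \<Rightarrow> nat \<Rightarrow> nat set" where
  "AA b d = {n. n \<ge> 1 \<and> digit_count b d n = 0}"

lemma AA_iff: "b \<ge> 2 \<Longrightarrow> m \<in> AA b d \<longleftrightarrow> m \<ge> 1 \<and> m mod b \<noteq> d \<and> (m div b = 0 \<or> m div b \<in> AA b d)"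
  unfolding AA_def using dc_step[of b m d] by (auto split: if_splits)

definition Lv :: "nat \<Rightarrow> nat \<Rightarrow> nat \<Rightarrow> nat set" where
  "Lv b d k = {n \<in> AA b d. b^k \<le> n \<and> n < b^Suc k}"

lemma Lv0: "b \<ge> 2 \<Longrightarrow> Lv b d 0 = {1..<b} - {d}"
proof -
  assume b: "b \<ge> 2"
  show ?thesis
  proof (intro set_eqI iffI)
    fix m assume "m \<in> Lv b d 0"
    then show "m \<in> {1..<b} - {d}" using AA_iff[OF b, of m d] by (auto simp: Lv_def)
  next
    fix m assume "m \<in> {1..<b} - {d}"
    then show "m \<in> Lv b d 0" using AA_iff[OF b, of m d] by (auto simp: Lv_def)
  qed
qed

lemma LvS: "b \<ge> 2 \<Longrightarrow> Lv b d (Suc k) = (\<lambda>(n,j). b*n+j) ` (Lv b d k \<times> ({0..<b} - {d}))"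
proof -
  assume b: "b \<ge> 2"
  show ?thesis
  proof (intro set_eqI iffI)
    fix m assume m: "m \<in> Lv b d (Suc k)"
    have bk: "b^k \<ge> 1" using b by simp
    have m1: "b^Suc k \<le> m" "m < b^Suc (Suc k)" "m \<in> AA b d" using m by (auto simp: Lv_def)
    have "b*b^k \<le> m" using m1(1) by simp
    hence "(b*b^k) div b \<le> m div b" by (rule div_le_mono)
    hence "b^k \<le> m div b" using b by simp
    moreover have "m div b < b^Suc k" using m1(2) b
      by (simp add: div_less_iff_less_mult mult.commute)
    ultimately have "m div b \<in> Lv b d k" "m mod b \<noteq> d" using m1(3) AA_iff[OF b, of m d] bk
      by (auto simp: Lv_def)
    moreover have "m mod b < b" using b by simp
    moreover have "m = b * (m div b) + m mod b" by simp
    ultimately show "m \<in> (\<lambda>(n,j). b*n+j) ` (Lv b d k \<times> ({0..<b} - {d}))"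
      by (intro image_eqI[of _ _ "(m div b, m mod b)"]) auto
  next
    fix m assume "m \<in> (\<lambda>(n,j). b*n+j) ` (Lv b d k \<times> ({0..<b} - {d}))"
    then obtain p where p: "p \<in> Lv b d k \<times> ({0..<b} - {d})" "m = (\<lambda>(n,j). b*n+j) p" by blast
    obtain n j where "p = (n,j)" by fastforce
    with p have nj: "m = b*n+j" "n \<in> Lv b d k" "j < b" "j \<noteq> d" by auto
    have dv: "m div b = n" "m mod b = j" using nj b by auto
    have n: "n \<in> AA b d" "b^k \<le> n" "n < b^Suc k" using nj by (auto simp: Lv_def)
    have "b^Suc k \<le> m" using n(2) b nj(1) by (simp add: trans_le_add1)
    moreover have "m < b^Suc (Suc k)"
    proof -
      have "m < b*(n+1)" using nj by simp
      also have "\<dots> \<le> b * b^Suc k" using n(3) by (intro mult_le_mono2) simp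
      finally show ?thesis by simp
    qed
    moreover have "m \<ge> 1"
    proof -
      have "b^Suc k \<ge> 1" using b by simp
      then show ?thesis using calculation(1) by linarith
    qed
    moreover have "m \<in> AA b d" using AA_iff[OF b, of m d] dv n nj(4) calculation(3) by (auto simp: Lv_def)
    ultimately show "m \<in> Lv b d (Suc k)" by (simp add: Lv_def)
  qed
qed

lemma inj_map: "(b::nat) \<ge> 2 \<Longrightarrow> inj_on (\<lambda>(n,j). b*n+j) (X \<times> ({0..<b} - {d}))"
proof (rule inj_onI)
  fix p q assume b: "b \<ge> 2" and p: "p \<in> X \<times> ({0..<b} - {d})" and q: "q \<in> X \<times> ({0..<b} - {d})"
    and e: "(\<lambda>(n,j). b*n+j) p = (\<lambda>(n,j). b*n+j) q"
  obtain n1 j1 where p1: "p = (n1,j1)" "j1 < b" using p by auto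
  obtain n2 j2 where q1: "q = (n2,j2)" "j2 < b" using q by auto
  have e2: "b*n1+j1 = b*n2+j2" using e p1 q1 by simp
  have "n1 = (b*n1+j1) div b" "j1 = (b*n1+j1) mod b" using p1 b by auto
  moreover have "n2 = (b*n2+j2) div b" "j2 = (b*n2+j2) mod b" using q1 b by auto
  ultimately show "p = q" using e2 p1 q1 by metis
qed



lemma ln_split: "x > 0 \<Longrightarrow> ln (1 + 1 / x) = ln (x + 1) - ln x" for x :: real
proof -
  assume x: "x > 0"
  have "1 + 1 / x = (x + 1) / x" using x by (simp add: field_simps)
  then show ?thesis using x by (simp add: ln_div)
qed

lemma tele: "b \<ge> 2 \<Longrightarrow> n \<ge> 1 \<Longrightarrow>
  (\<Sum>j\<in>{0..<b}. real b * ln (1 + 1 / real (b*n+j))) = real b * ln (1 + 1 / real n)"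
proof -
  assume b: "b \<ge> 2" and n: "n \<ge> 1"
  have "(\<Sum>j\<in>{0..<b}. ln (1 + 1 / real (b*n+j))) = (\<Sum>j\<in>{0..<b}. ln (real (b*n + Suc j)) - ln (real (b*n+j)))"
  proof (rule sum.cong[OF refl])
    fix j assume "j \<in> {0..<b}"
    have "real (b*n+j) > 0" using b n by (simp add: add_pos_nonneg)
    then show "ln (1 + 1 / real (b*n+j)) = ln (real (b*n + Suc j)) - ln (real (b*n+j))"
      by (simp add: ln_split)
  qed
  also have "\<dots> = ln (real (b*n+b)) - ln (real (b*n+0))"
    using sum_Suc_diff'[of 0 b "\<lambda>j. ln (real (b*n+j))"] by simp
  also have "\<dots> = ln (1 + 1 / real n)"
  proof -
    have "real (b*n+b) = real b * (real n + 1)" by (simp add: algebra_simps)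
    moreover have "real (b*n) = real b * real n" by simp
    moreover have "real b > 0" "real n > 0" using b n by auto
    ultimately show ?thesis by (simp add: ln_mult ln_split)
  qed
  finally show ?thesis by (simp add: sum_distrib_left[symmetric])
qed

lemma step_ineq: "b \<ge> 2 \<Longrightarrow> n \<ge> 1 \<Longrightarrow> d \<ge> 1 \<Longrightarrow> d < b \<Longrightarrow>
  real b * ln (1 + 1 / real n) < 1 / real n + (\<Sum>j\<in>{0..<b} - {d}. real b * ln (1 + 1 / real (b*n+j)))"
proof -
  assume b: "b \<ge> 2" and n: "n \<ge> 1" and d: "d \<ge> 1" "d < b"
  have "(\<Sum>j\<in>{0..<b} - {d}. real b * ln (1 + 1 / real (b*n+j))) =
        real b * ln (1 + 1 / real n) - real b * ln (1 + 1 / real (b*n+d))"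
    using tele[OF b n] d by (simp add: sum_diff1)
  moreover have "real b * ln (1 + 1 / real (b*n+d)) < 1 / real n"
  proof -
    have pos: "real (b*n+d) > 0" using d by (simp add: add_nonneg_pos)
    have "ln (1 + 1 / real (b*n+d)) \<le> 1 / real (b*n+d)"
      by (rule ln_add_one_self_le_self) simp
    hence "real b * ln (1 + 1 / real (b*n+d)) \<le> real b / real (b*n+d)"
      using b by (simp add: mult_left_mono divide_inverse)
    also have "\<dots> < 1 / real n"
    proof -
      have "real b * real n < real (b*n+d)" using d by simp
      then show ?thesis using b n pos by (simp add: field_simps)
    qed
    finally show ?thesis .
  qed
  ultimately show ?thesis by simp
qed



lemma Lv_fin: "finite (Lv b d k)"
  by (rule finite_subset[of _ "{..<b^Suc k}"]) (auto simp: Lv_def)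

lemma Lv_ge1: "n \<in> Lv b d k \<Longrightarrow> n \<ge> 1"
  by (auto simp: Lv_def AA_def)

lemma Lv_card: "b \<ge> 2 \<Longrightarrow> d < b \<Longrightarrow> card (Lv b d k) \<le> (b-1)^Suc k"
proof (induction k)
  case 0
  then show ?case using card_Diff1_le[of "{1..<b}" d] by (simp add: Lv0)
next
  case (Suc k)
  have "card (Lv b d (Suc k)) \<le> card (Lv b d k \<times> ({0..<b} - {d}))"
    unfolding LvS[OF Suc.prems(1)] by (rule card_image_le) (simp add: Lv_fin)
  also have "\<dots> = card (Lv b d k) * (b-1)" using Suc.prems by (simp add: card_cartesian_product)
  also have "\<dots> \<le> (b-1)^Suc k * (b-1)" using Suc.IH[OF Suc.prems] by (rule mult_le_mono1)
  also have "\<dots> = (b-1)^Suc (Suc k)" by (rule power_Suc2[symmetric])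
  finally show ?case .
qed

lemma P_step: "b \<ge> 2 \<Longrightarrow> 1 \<le> d \<Longrightarrow> d < b \<Longrightarrow>
  (\<Sum>n\<in>Lv b d k. real b * ln (1 + 1 / real n)) \<le>
   (\<Sum>n\<in>Lv b d k. 1 / real n) + (\<Sum>n\<in>Lv b d (Suc k). real b * ln (1 + 1 / real n))
  \<and> (Lv b d k \<noteq> {} \<longrightarrow> (\<Sum>n\<in>Lv b d k. real b * ln (1 + 1 / real n)) <
   (\<Sum>n\<in>Lv b d k. 1 / real n) + (\<Sum>n\<in>Lv b d (Suc k). real b * ln (1 + 1 / real n)))"
proof -
  assume b: "b \<ge> 2" and d: "1 \<le> d" "d < b"
  let ?phi = "\<lambda>n. real b * ln (1 + 1 / real n)"
  have eq: "(\<Sum>n\<in>Lv b d (Suc k). ?phi n) = (\<Sum>n\<in>Lv b d k. \<Sum>j\<in>{0..<b} - {d}. ?phi (b*n+j))"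
    unfolding LvS[OF b] sum.reindex[OF inj_map[OF b]]
    by (simp add: sum.cartesian_product split_def)
  have E: "(\<Sum>n\<in>Lv b d k. 1 / real n) + (\<Sum>n\<in>Lv b d (Suc k). ?phi n) =
     (\<Sum>n\<in>Lv b d k. 1 / real n + (\<Sum>j\<in>{0..<b} - {d}. ?phi (b*n+j)))"
    unfolding eq by (simp add: sum.distrib)
  have pt: "\<And>n. n \<in> Lv b d k \<Longrightarrow> ?phi n < 1 / real n + (\<Sum>j\<in>{0..<b} - {d}. ?phi (b*n+j))"
    using step_ineq[OF b _ d] Lv_ge1 by blast
  have le: "(\<Sum>n\<in>Lv b d k. ?phi n) \<le> (\<Sum>n\<in>Lv b d k. 1 / real n + (\<Sum>j\<in>{0..<b} - {d}. ?phi (b*n+j)))"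
    by (rule sum_mono) (rule less_imp_le, rule pt)
  have lt: "Lv b d k \<noteq> {} \<Longrightarrow> (\<Sum>n\<in>Lv b d k. ?phi n) < (\<Sum>n\<in>Lv b d k. 1 / real n + (\<Sum>j\<in>{0..<b} - {d}. ?phi (b*n+j)))"
    using pt by (intro sum_strict_mono[OF Lv_fin]) blast+
  show ?thesis unfolding E using le lt by blast
qed



theorem mainTheorem4:
  fixes b d :: nat
  assumes "b > 2" and "1 \<le> d" and "d \<le> b - 1"
  shows "(\<lambda>n. 1 / real n) summable_on {n. n \<ge> 1 \<and> digit_count b d n = 0} \<and>
    H0 b d > real b * ln (real b) - real b * ln (1 + 1 / real d) \<and>
    H0 b d > real b * ln (real b / 2)"
proof -
  have b: "b \<ge> 2" using assms by simp
  have d: "1 \<le> d" "d < b" using assms by auto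
  define f where "f = (\<lambda>n::nat. 1 / real n)"
  define phi where "phi = (\<lambda>n::nat. real b * ln (1 + 1 / real n))"
  define S where "S = (\<lambda>k. \<Sum>n\<in>Lv b d k. f n)"
  define P where "P = (\<lambda>k. \<Sum>n\<in>Lv b d k. phi n)"
  define B where "B = (\<lambda>K. {n \<in> AA b d. n < b^K})"
  define q where "q = real (b-1) / real b"
  have A_eq: "{n. n \<ge> 1 \<and> digit_count b d n = 0} = AA b d" by (simp add: AA_def)
  have fB: "finite (B K)" for K by (rule finite_subset[of _ "{..<b^K}"]) (auto simp: B_def)
  have BS: "sum f (B K) = (\<Sum>k<K. S k)" for K
  proof (induction K)
    case 0
    have "B 0 = {}" by (auto simp: B_def AA_def)
    then show ?case by simp
  next
    case (Suc K)
    have "b^K \<le> b*b^K" using b by simp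
    hence bb: "\<And>x::nat. x < b^K \<Longrightarrow> x < b*b^K" by linarith
    have "B (Suc K) = B K \<union> Lv b d K" 
      using b by (auto simp: B_def Lv_def intro: bb)
    moreover have "B K \<inter> Lv b d K = {}" by (auto simp: B_def Lv_def)
    ultimately have "sum f (B (Suc K)) = sum f (B K) + S K"
      by (simp add: S_def sum.union_disjoint fB Lv_fin)
    then show ?case using Suc by simp
  qed
  have q: "0 \<le> q" "q < 1" using b by (auto simp: q_def)
  have Sk: "S k \<le> real (b-1) * q^k" for k
  proof -
    have "S k \<le> real (card (Lv b d k)) * (1 / real b ^ k)"
      unfolding S_def f_def
    proof (rule sum_bounded_above)
      fix n assume "n \<in> Lv b d k"
      hence "real b ^ k \<le> real n" "real b ^ k > 0" using b by (auto simp: Lv_def)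
      then show "1 / real n \<le> 1 / real b ^ k" by (simp add: frac_le)
    qed
    also have "\<dots> \<le> real ((b-1)^Suc k) * (1 / real b ^ k)"
    proof (rule mult_right_mono)
      show "real (card (Lv b d k)) \<le> real ((b-1)^Suc k)"
        using Lv_card[OF b d(2), of k] by (simp only: of_nat_le_iff)
    qed simp
    also have "\<dots> = real (b-1) * q^k" by (simp add: q_def power_divide)
    finally show ?thesis .
  qed
  have Spos: "S k \<ge> 0" for k unfolding S_def f_def by (rule sum_nonneg) simp
  have sumS: "(\<Sum>k<K. S k) \<le> real (b-1) * real b" for K
  proof -
    have "(\<Sum>k<K. S k) \<le> (\<Sum>k<K. real (b-1) * q^k)" by (rule sum_mono) (rule Sk)
    also have "\<dots> = real (b-1) * ((1 - q^K) / (1 - q))"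
      using q by (simp add: sum_distrib_left[symmetric] sum_gp_strict)
    also have "\<dots> \<le> real (b-1) * real b"
    proof -
      have "1 - q = 1 / real b" using b by (simp add: q_def field_simps)
      moreover have "q^K \<ge> 0" using q by simp
      ultimately show ?thesis using b by (simp add: mult_left_mono)
    qed
    finally show ?thesis .
  qed
  have summ: "f summable_on AA b d"
  proof (rule nonneg_bdd_above_summable_on)
    show "\<And>x. x \<in> AA b d \<Longrightarrow> 0 \<le> f x" by (simp add: f_def)
    show "bdd_above (sum f ` {F. F \<subseteq> AA b d \<and> finite F})"
    proof (rule bdd_aboveI2)
      fix F assume F: "F \<in> {F. F \<subseteq> AA b d \<and> finite F}"
      define K where "K = Sum F"
      have "F \<subseteq> B K"
      proof
        fix n assume n: "n \<in> F"
        have "n \<le> K" unfolding K_def using F n by (auto intro: member_le_sum)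
        have "n < 2^n" by (rule less_exp)
        also have "\<dots> \<le> b^n" using b by (simp add: power_mono)
        also have "\<dots> \<le> b^K" using b \<open>n \<le> K\<close> by (simp add: power_increasing)
        finally show "n \<in> B K" using F n by (auto simp: B_def)
      qed
      hence "sum f F \<le> sum f (B K)" by (intro sum_mono2 fB) (auto simp: f_def)
      also have "\<dots> \<le> real (b-1) * real b" using BS sumS by simp
      finally show "sum f F \<le> real (b-1) * real b" .
    qed
  qed
  have Hge: "sum f (B K) \<le> H0 b d" for K
    unfolding H0_def A_eq f_def[symmetric]
    by (rule finite_sum_le_infsum[OF summ fB]) (auto simp: B_def f_def)
  define Q where "Q = (\<lambda>K. (\<Sum>k<K. S k) + P K)"
  have Qmono: "Q K \<le> Q (Suc K)" for K
    using P_step[OF b d, of K] by (simp add: Q_def S_def P_def f_def phi_def)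
  have L0: "Lv b d 0 \<noteq> {}"
  proof -
    have "(if d = 1 then 2 else 1) \<in> Lv b d 0" using Lv0[OF b] assms by auto
    then show ?thesis by blast
  qed
  have Q01: "P 0 < Q 1"
    using P_step[OF b d, of 0] L0 by (simp add: Q_def S_def P_def f_def phi_def)
  define \<delta> where "\<delta> = Q 1 - P 0"
  have \<delta>: "\<delta> > 0" using Q01 by (simp add: \<delta>_def)
  have PK: "P K \<le> real b * (real (b-1) * q^K)" for K
  proof -
    have "P K \<le> (\<Sum>n\<in>Lv b d K. real b * f n)" unfolding P_def phi_def f_def
    proof (rule sum_mono)
      fix n assume "n \<in> Lv b d K"
      have "ln (1 + 1 / real n) \<le> 1 / real n" by (rule ln_add_one_self_le_self) simp
      then show "real b * ln (1 + 1 / real n) \<le> real b * (1 / real n)" by (rule mult_left_mono) simp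
    qed
    also have "\<dots> = real b * S K" by (simp add: S_def sum_distrib_left)
    also have "\<dots> \<le> real b * (real (b-1) * q^K)" using Sk by (simp add: mult_left_mono)
    finally show ?thesis .
  qed
  obtain K0 where K0: "q^K0 < \<delta> / (real b * real (b-1))"
    using real_arch_pow_inv[of "\<delta> / (real b * real (b-1))" q] \<delta> q b by auto
  define K where "K = Suc K0"
  have "q^K \<le> q^K0" unfolding K_def using q by (intro power_decreasing) auto
  moreover have C: "real b * real (b-1) > 0" using b by simp
  ultimately have "(real b * real (b-1)) * q^K \<le> (real b * real (b-1)) * q^K0"
    by (intro mult_left_mono) auto
  moreover have "(real b * real (b-1)) * q^K0 < \<delta>"
  proof -
    have "q^K0 * (real b * real (b-1)) < \<delta>" using K0 pos_less_divide_eq[OF C] by blast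
    then show ?thesis by (simp only: mult.commute)
  qed
  ultimately have "real b * (real (b-1) * q^K) < \<delta>" by (simp add: mult.assoc)
  hence PKd: "P K < \<delta>" using PK[of K] by simp
  have "Q 1 \<le> Q K" unfolding K_def by (rule lift_Suc_mono_le[of Q, OF Qmono]) simp
  hence main: "P 0 < H0 b d"
    using PKd Hge[of K] BS[of K] by (simp add: Q_def \<delta>_def)
  have P0: "P 0 = real b * ln (real b) - real b * ln (1 + 1 / real d)"
  proof -
    have "P 0 = (\<Sum>r\<in>{1..<b}. phi r) - phi d"
      unfolding P_def Lv0[OF b] using d by (simp add: sum_diff1)
    also have "(\<Sum>r\<in>{1..<b}. phi r) = real b * (\<Sum>r=1..<b. ln (real (Suc r)) - ln (real r))"
      unfolding phi_def sum_distrib_left[symmetric]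
      by (intro arg_cong[where f="\<lambda>x. real b * x"] sum.cong refl) (auto simp: ln_split add.commute)
    also have "(\<Sum>r=1..<b. ln (real (Suc r)) - ln (real r)) = ln (real b) - ln (real 1)"
      using b by (intro sum_Suc_diff') simp
    finally show ?thesis by (simp add: phi_def)
  qed
  have "1 / real d \<le> 1" using d by simp
  moreover have "1 / real d \<ge> 0" by simp
  ultimately have "ln (1 + 1 / real d) \<le> ln 2" by (subst ln_le_cancel_iff; linarith)
  hence "real b * ln (real b / 2) \<le> real b * ln (real b) - real b * ln (1 + 1 / real d)"
    using b by (simp add: ln_div right_diff_distrib[symmetric] mult_left_mono)
  then show ?thesis using main P0 summ A_eq f_def by auto
qed


end
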